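(* Let $F$ be an infinite field of characteristic different from $2$, and let $\mathbb{O}=(((F,\alpha),\beta),\gamma)$ be the octonion (Cayley–Dickson) algebra, with its $\mathbb{Z}_2^3$-grading coming from the Cayley–Dickson process. Then the $T_{\mathbb{Z}_2^3}$-ideal $T_{\mathbb{Z}_2^3}(\mathbb{O})$ of $\mathbb{Z}_2^3$-graded polynomial identities of $\mathbb{O}$ is generated, as a graded $T$-ideal, by the following identities (for distinct variables $x_1,x_2,x_3$ whose degrees satisfy the stated conditions): \begin{align*} [x_1,x_2]=0, &\quad |\langle g(x_1),g(x_2)\rangle|\le 2;\\ x_1\circ x_2=0, &\quad |\langle g(x_1),g(x_2)\rangle|\ge 4;\\ (x_1,x_2,x_3)=0, &\quad |\langle g(x_1),g(x_2),g(x_3)\rangle|\le 4;\\ (x_1x_2)x_3+x_1(x_2x_3)=0, &\quad \langle g(x_1),g(x_2),g(x_3)\rangle=\mathbb{Z}_2^3. \end{align*}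
   Context: Cayley–Dickson process: if $A$ is a unital algebra over a commutative ring with an involution $a\mapsto\bar a$ and $\alpha\neq 0$ a scalar, $(A,\alpha)=A\oplus A$ with product $(a_1,a_2)(a_3,a_4)=(a_1a_3+\alpha a_4\bar a_2,\ \bar a_1a_4+a_3a_2)$ and involution $\overline{(a_1,a_2)}=(\bar a_1,-a_2)$. If $A$ is $G$-graded, $(A,\alpha)$ is $G\times\mathbb{Z}_2$-graded by $(A,\alpha)_{(h,0)}=A_h\oplus 0$, $(A,\alpha)_{(h,1)}=0\oplus A_h$. Here $F$ is given the trivial involution and trivial grading, and $\alpha,\beta,\gamma\in F$ are nonzero, so $\mathbb{O}$ is $\mathbb{Z}_2^3$-graded; groups $\mathbb{Z}_2^k$ are written additively. Graded identities: $F_G\{X\}$ is the free nonassociative algebra on variables $x_i^a$ ($i\in\mathbb{N}$, $a\in G$), graded by declaring $g(x_i^a)=a$ and $g(uv)=g(u)g(v)$ for monomials. A polynomial $f(x_1,\dots,x_n)$ is a graded identity of a $G$-graded algebra $A$ if $f(a_1,\dots,a_n)=0$ for all $a_i\in A_{g(x_i)}$; $T_G(A)$ is the set of all of them. A graded $T$-ideal is an ideal of $F_G\{X\}$ invariant under all graded endomorphisms (those sending each variable to an element of the same degree); "generated" means the smallest such ideal containing the given polynomials. $[x,y]=xy-yx$, $x\circ y=xy+yx$, $(x,y,z)=(xy)z-x(yz)$; $\langle\cdot\rangle$ is the subgroup generated. *)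

theory Defs
  imports "HOL-Library.Poly_Mapping" "HOL-Library.Product_Plus"
begin

text \<open>Z_2 is modelled by bool with addition = exclusive or (False = 0).
  The Cayley-Dickson grading of O = (((F,alpha),beta),gamma) is by
  (Z_2 x Z_2) x Z_2 (the trivial group grading F is dropped).\<close>

type_synonym z2_3 = "(bool \<times> bool) \<times> bool"

definition gadd :: "z2_3 \<Rightarrow> z2_3 \<Rightarrow> z2_3" where
  "gadd x y = (((fst (fst x) \<noteq> fst (fst y)), (snd (fst x) \<noteq> snd (fst y))), (snd x \<noteq> snd y))"

definition gzero :: z2_3 where "gzero = ((False, False), False)"

inductive_set gen_subgroup :: "z2_3 set \<Rightarrow> z2_3 set" for S where
  gen_zero: "gzero \<in> gen_subgroup S"
| gen_base: "s \<in> S \<Longrightarrow> s \<in> gen_subgroup S"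
| gen_add: "a \<in> gen_subgroup S \<Longrightarrow> b \<in> gen_subgroup S \<Longrightarrow> gadd a b \<in> gen_subgroup S"

fun cd_mul :: "('b::ab_group_add \<Rightarrow> 'b \<Rightarrow> 'b) \<Rightarrow> ('b \<Rightarrow> 'b) \<Rightarrow> ('s \<Rightarrow> 'b \<Rightarrow> 'b) \<Rightarrow> 's
                \<Rightarrow> 'b \<times> 'b \<Rightarrow> 'b \<times> 'b \<Rightarrow> 'b \<times> 'b" where
  "cd_mul mul cnj sc \<alpha> (a1, a2) (a3, a4) =
     (mul a1 a3 + sc \<alpha> (mul a4 (cnj a2)), mul (cnj a1) a4 + mul a3 a2)"

fun cd_cnj :: "('b::ab_group_add \<Rightarrow> 'b) \<Rightarrow> 'b \<times> 'b \<Rightarrow> 'b \<times> 'b" where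
  "cd_cnj cnj (a1, a2) = (cnj a1, - a2)"

fun cd_sc :: "('s \<Rightarrow> 'b \<Rightarrow> 'b) \<Rightarrow> 's \<Rightarrow> 'b \<times> 'b \<Rightarrow> 'b \<times> 'b" where
  "cd_sc sc c (a1, a2) = (sc c a1, sc c a2)"

fun cd_hom :: "('g \<Rightarrow> 'b::zero \<Rightarrow> bool) \<Rightarrow> 'g \<times> bool \<Rightarrow> 'b \<times> 'b \<Rightarrow> bool" where
  "cd_hom hom (h, b) (x, y) = (if b then x = 0 \<and> hom h y else hom h x \<and> y = 0)"

definition mul1 :: "'a::field \<Rightarrow> 'a \<times> 'a \<Rightarrow> 'a \<times> 'a \<Rightarrow> 'a \<times> 'a" where
  "mul1 \<alpha> = cd_mul (*) id (*) \<alpha>"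
definition cnj1 :: "'a::field \<times> 'a \<Rightarrow> 'a \<times> 'a" where "cnj1 = cd_cnj id"
definition sc1 :: "'a::field \<Rightarrow> 'a \<times> 'a \<Rightarrow> 'a \<times> 'a" where "sc1 = cd_sc (*)"
definition hom1 :: "bool \<Rightarrow> 'a::field \<times> 'a \<Rightarrow> bool" where
  "hom1 b p = cd_hom (\<lambda>(_::unit) (_::'a). True) ((), b) p"

type_synonym 'a quat = "('a \<times> 'a) \<times> ('a \<times> 'a)"
definition mul2 :: "'a::field \<Rightarrow> 'a \<Rightarrow> 'a quat \<Rightarrow> 'a quat \<Rightarrow> 'a quat" where
  "mul2 \<alpha> \<beta> = cd_mul (mul1 \<alpha>) cnj1 sc1 \<beta>"
definition cnj2 :: "'a::field quat \<Rightarrow> 'a quat" where "cnj2 = cd_cnj cnj1"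
definition sc2 :: "'a::field \<Rightarrow> 'a quat \<Rightarrow> 'a quat" where "sc2 = cd_sc sc1"
definition hom2 :: "bool \<times> bool \<Rightarrow> 'a::field quat \<Rightarrow> bool" where "hom2 = cd_hom hom1"

type_synonym 'a oct = "'a quat \<times> 'a quat"
definition omul :: "'a::field \<Rightarrow> 'a \<Rightarrow> 'a \<Rightarrow> 'a oct \<Rightarrow> 'a oct \<Rightarrow> 'a oct" where
  "omul \<alpha> \<beta> \<gamma> = cd_mul (mul2 \<alpha> \<beta>) cnj2 sc2 \<gamma>"
definition osc :: "'a::field \<Rightarrow> 'a oct \<Rightarrow> 'a oct" where "osc = cd_sc sc2"
definition ohom :: "z2_3 \<Rightarrow> 'a::field oct \<Rightarrow> bool" where "ohom = cd_hom hom2"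

text \<open>Variables x_i^a are pairs (i,a); monomials are nonassociative words.\<close>
type_synonym gvar = "nat \<times> z2_3"

datatype 'v mon = Var 'v | Mul "'v mon" "'v mon"

type_synonym 'a fpoly = "gvar mon \<Rightarrow>\<^sub>0 'a"

fun mdeg :: "gvar mon \<Rightarrow> z2_3" where
  "mdeg (Var v) = snd v"
| "mdeg (Mul u w) = gadd (mdeg u) (mdeg w)"

definition pvar :: "gvar \<Rightarrow> 'a::field fpoly" where
  "pvar v = Poly_Mapping.single (Var v) 1"

definition pmul :: "'a::field fpoly \<Rightarrow> 'a fpoly \<Rightarrow> 'a fpoly" where
  "pmul p q = (\<Sum>m\<in>Poly_Mapping.keys p. \<Sum>n\<in>Poly_Mapping.keys q.
                 Poly_Mapping.single (Mul m n) (Poly_Mapping.lookup p m * Poly_Mapping.lookup q n))"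

definition psc :: "'a::field \<Rightarrow> 'a fpoly \<Rightarrow> 'a fpoly" where
  "psc c p = Poly_Mapping.map (\<lambda>x. c * x) p"

definition phom :: "z2_3 \<Rightarrow> 'a::field fpoly \<Rightarrow> bool" where
  "phom a p = (\<forall>m\<in>Poly_Mapping.keys p. mdeg m = a)"

definition ideal_fp :: "'a::field fpoly set \<Rightarrow> bool" where
  "ideal_fp I = (0 \<in> I \<and> (\<forall>p\<in>I. \<forall>q\<in>I. p + q \<in> I) \<and> (\<forall>c. \<forall>p\<in>I. psc c p \<in> I)
     \<and> (\<forall>p\<in>I. \<forall>q. pmul p q \<in> I \<and> pmul q p \<in> I))"

definition graded_endo :: "('a::field fpoly \<Rightarrow> 'a fpoly) \<Rightarrow> bool" where
  "graded_endo \<phi> = ((\<forall>p q. \<phi> (p + q) = \<phi> p + \<phi> q) \<and> (\<forall>c p. \<phi> (psc c p) = psc c (\<phi> p))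
     \<and> (\<forall>p q. \<phi> (pmul p q) = pmul (\<phi> p) (\<phi> q))
     \<and> (\<forall>v. phom (snd v) (\<phi> (pvar v))))"

definition graded_T_ideal :: "'a::field fpoly set \<Rightarrow> bool" where
  "graded_T_ideal I = (ideal_fp I \<and> (\<forall>\<phi>. graded_endo \<phi> \<longrightarrow> \<phi> ` I \<subseteq> I))"

definition T_generated :: "'a::field fpoly set \<Rightarrow> 'a fpoly set" where
  "T_generated S = \<Inter> {I. graded_T_ideal I \<and> S \<subseteq> I}"

fun oeval_mon :: "'a::field \<Rightarrow> 'a \<Rightarrow> 'a \<Rightarrow> (gvar \<Rightarrow> 'a oct) \<Rightarrow> gvar mon \<Rightarrow> 'a oct" where
  "oeval_mon \<alpha> \<beta> \<gamma> \<nu> (Var v) = \<nu> v"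
| "oeval_mon \<alpha> \<beta> \<gamma> \<nu> (Mul u w) = omul \<alpha> \<beta> \<gamma> (oeval_mon \<alpha> \<beta> \<gamma> \<nu> u) (oeval_mon \<alpha> \<beta> \<gamma> \<nu> w)"

definition oeval :: "'a::field \<Rightarrow> 'a \<Rightarrow> 'a \<Rightarrow> (gvar \<Rightarrow> 'a oct) \<Rightarrow> 'a fpoly \<Rightarrow> 'a oct" where
  "oeval \<alpha> \<beta> \<gamma> \<nu> p = (\<Sum>m\<in>Poly_Mapping.keys p. osc (Poly_Mapping.lookup p m) (oeval_mon \<alpha> \<beta> \<gamma> \<nu> m))"

definition T_oct :: "'a::field \<Rightarrow> 'a \<Rightarrow> 'a \<Rightarrow> 'a fpoly set" where
  "T_oct \<alpha> \<beta> \<gamma> = {f. \<forall>\<nu>. (\<forall>v. ohom (snd v) (\<nu> v)) \<longrightarrow> oeval \<alpha> \<beta> \<gamma> \<nu> f = 0}"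

definition pcomm :: "'a::field fpoly \<Rightarrow> 'a fpoly \<Rightarrow> 'a fpoly" where
  "pcomm x y = pmul x y - pmul y x"
definition pjordan :: "'a::field fpoly \<Rightarrow> 'a fpoly \<Rightarrow> 'a fpoly" where
  "pjordan x y = pmul x y + pmul y x"
definition passoc :: "'a::field fpoly \<Rightarrow> 'a fpoly \<Rightarrow> 'a fpoly \<Rightarrow> 'a fpoly" where
  "passoc x y z = pmul (pmul x y) z - pmul x (pmul y z)"

definition oct_gens :: "'a::field fpoly set" where
  "oct_gens =
     {pcomm (pvar u) (pvar v) | u v. u \<noteq> v \<and> card (gen_subgroup {snd u, snd v}) \<le> 2}
   \<union> {pjordan (pvar u) (pvar v) | u v. u \<noteq> v \<and> card (gen_subgroup {snd u, snd v}) \<ge> 4}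
   \<union> {passoc (pvar u) (pvar v) (pvar w) | u v w. u \<noteq> v \<and> u \<noteq> w \<and> v \<noteq> w
         \<and> card (gen_subgroup {snd u, snd v, snd w}) \<le> 4}
   \<union> {pmul (pmul (pvar u) (pvar v)) (pvar w) + pmul (pvar u) (pmul (pvar v) (pvar w))
         | u v w. u \<noteq> v \<and> u \<noteq> w \<and> v \<noteq> w
         \<and> gen_subgroup {snd u, snd v, snd w} = UNIV}"

end

theory Submission
  imports Defs "HOL-Computational_Algebra.Polynomial" "HOL-Library.Multiset"
begin


lemma lookup_psc[simp]: "Poly_Mapping.lookup (psc c p) k = c * Poly_Mapping.lookup p k"
  unfolding psc_def by transfer (simp add: when_def)

lemma lookup_pmul: "Poly_Mapping.lookup (pmul p q) k =
   (case k of Var _ \<Rightarrow> 0 | Mul m n \<Rightarrow> Poly_Mapping.lookup p m * Poly_Mapping.lookup q n)"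
proof -
  have "Poly_Mapping.lookup (pmul p q) k = (\<Sum>m\<in>Poly_Mapping.keys p. \<Sum>n\<in>Poly_Mapping.keys q.
     (case k of Var _ \<Rightarrow> 0 | Mul m' n' \<Rightarrow> (if m' = m \<and> n' = n then Poly_Mapping.lookup p m * Poly_Mapping.lookup q n else 0)))"
    unfolding pmul_def lookup_sum
    by (intro sum.cong refl) (auto simp: lookup_single when_def split: mon.split)
  also have "\<dots> = (case k of Var _ \<Rightarrow> 0 | Mul m n \<Rightarrow> Poly_Mapping.lookup p m * Poly_Mapping.lookup q n)"
  proof (cases k)
    case (Var x1)
    then show ?thesis by simp
  next
    case (Mul m' n')
    have "(\<Sum>m\<in>Poly_Mapping.keys p. \<Sum>n\<in>Poly_Mapping.keys q.
       (if m' = m \<and> n' = n then Poly_Mapping.lookup p m * Poly_Mapping.lookup q n else 0))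
       = Poly_Mapping.lookup p m' * Poly_Mapping.lookup q n'"
    proof -
      have "(\<Sum>m\<in>Poly_Mapping.keys p. \<Sum>n\<in>Poly_Mapping.keys q.
       (if m' = m \<and> n' = n then Poly_Mapping.lookup p m * Poly_Mapping.lookup q n else 0))
       = (\<Sum>m\<in>Poly_Mapping.keys p. if m' = m then (\<Sum>n\<in>Poly_Mapping.keys q.
       (if n' = n then Poly_Mapping.lookup p m * Poly_Mapping.lookup q n else 0)) else 0)"
        by (intro sum.cong refl) auto
      also have "\<dots> = (\<Sum>m\<in>Poly_Mapping.keys p. if m' = m then Poly_Mapping.lookup p m * Poly_Mapping.lookup q n' else 0)"
        by (intro sum.cong refl) (auto simp: in_keys_iff)
      also have "\<dots> = Poly_Mapping.lookup p m' * Poly_Mapping.lookup q n'"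
        by (auto simp: in_keys_iff)
      finally show ?thesis .
    qed
    then show ?thesis using Mul by simp
  qed
  finally show ?thesis .
qed

lemma pmul_add_left: "pmul (p + q) r = pmul p r + pmul q r"
  by (rule poly_mapping_eqI) (simp add: lookup_pmul lookup_add algebra_simps split: mon.split)
lemma pmul_add_right: "pmul r (p + q) = pmul r p + pmul r q"
  by (rule poly_mapping_eqI) (simp add: lookup_pmul lookup_add algebra_simps split: mon.split)
lemma pmul_psc_left: "pmul (psc c p) r = psc c (pmul p r)"
  by (rule poly_mapping_eqI) (simp add: lookup_pmul algebra_simps split: mon.split)
lemma pmul_psc_right: "pmul r (psc c p) = psc c (pmul r p)"
  by (rule poly_mapping_eqI) (simp add: lookup_pmul algebra_simps split: mon.split)
lemma pmul_diff_left: "pmul (p - q) r = pmul p r - pmul q r"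
  by (rule poly_mapping_eqI) (simp add: lookup_pmul lookup_minus algebra_simps split: mon.split)
lemma pmul_diff_right: "pmul r (p - q) = pmul r p - pmul r q"
  by (rule poly_mapping_eqI) (simp add: lookup_pmul lookup_minus algebra_simps split: mon.split)
lemma pmul_zero[simp]: "pmul 0 r = 0" "pmul r 0 = 0"
  by (rule poly_mapping_eqI, simp add: lookup_pmul split: mon.split)+
lemma pmul_single: "pmul (Poly_Mapping.single m a) (Poly_Mapping.single n b) = Poly_Mapping.single (Mul m n) (a * b)"
  by (rule poly_mapping_eqI) (auto simp add: lookup_pmul lookup_single when_def split: mon.split)
lemma pmul_sum_left: "pmul (sum f A) r = (\<Sum>a\<in>A. pmul (f a) r)"
  by (induction A rule: infinite_finite_induct) (auto simp: pmul_add_left)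
lemma pmul_sum_right: "pmul r (sum f A) = (\<Sum>a\<in>A. pmul r (f a))"
  by (induction A rule: infinite_finite_induct) (auto simp: pmul_add_right)

lemma psc_add: "psc c (p + q) = psc c p + psc c q"
  by (rule poly_mapping_eqI) (simp add: lookup_add algebra_simps)
lemma psc_diff: "psc c (p - q) = psc c p - psc c q"
  by (rule poly_mapping_eqI) (simp add: lookup_minus algebra_simps)
lemma psc_add_scalar: "psc (a + b) p = psc a p + psc b p"
  by (rule poly_mapping_eqI) (simp add: lookup_add algebra_simps)
lemma psc_mult: "psc (a * b) p = psc a (psc b p)"
  by (rule poly_mapping_eqI) (simp add: algebra_simps)
lemma psc_0[simp]: "psc 0 p = 0" "psc c 0 = 0"
  by (rule poly_mapping_eqI, simp)+
lemma psc_1[simp]: "psc 1 p = p"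
  by (rule poly_mapping_eqI, simp)
lemma psc_m1: "psc (-1) p = - p"
  by (rule poly_mapping_eqI, simp)
lemma psc_single: "psc c (Poly_Mapping.single m a) = Poly_Mapping.single m (c * a)"
  by (rule poly_mapping_eqI) (auto simp add: lookup_single when_def)
lemma psc_sum: "psc c (sum f A) = (\<Sum>a\<in>A. psc c (f a))"
  by (induction A rule: infinite_finite_induct) (auto simp: psc_add)


definition LE :: "('a::field \<Rightarrow> 'c \<Rightarrow> 'c) \<Rightarrow> (gvar mon \<Rightarrow> 'c) \<Rightarrow> 'a fpoly \<Rightarrow> 'c::comm_monoid_add" where
  "LE sc F p = (\<Sum>m\<in>Poly_Mapping.keys p. sc (Poly_Mapping.lookup p m) (F m))"

lemma LE_superset:
  assumes "finite S" "Poly_Mapping.keys p \<subseteq> S" "\<And>x. sc 0 x = 0"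
  shows "LE sc F p = (\<Sum>m\<in>S. sc (Poly_Mapping.lookup p m) (F m))"
  unfolding LE_def using assms
  by (intro sum.mono_neutral_left) (auto simp: in_keys_iff)

lemma LE_add:
  assumes "\<And>x. sc 0 x = 0" "\<And>a b x. sc (a + b) x = sc a x + sc b x"
  shows "LE sc F (p + q) = LE sc F p + LE sc F q"
proof -
  let ?S = "Poly_Mapping.keys p \<union> Poly_Mapping.keys q"
  have "LE sc F (p + q) = (\<Sum>m\<in>?S. sc (Poly_Mapping.lookup (p+q) m) (F m))"
    by (rule LE_superset) (use assms keys_add[of p q] in auto)
  also have "\<dots> = (\<Sum>m\<in>?S. sc (Poly_Mapping.lookup p m) (F m)) + (\<Sum>m\<in>?S. sc (Poly_Mapping.lookup q m) (F m))"
    by (simp add: lookup_add assms sum.distrib)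
  also have "\<dots> = LE sc F p + LE sc F q"
    by (subst (1 2) LE_superset[where S = ?S]) (use assms in auto)
  finally show ?thesis .
qed

lemma LE_zero[simp]: "LE sc F 0 = 0"
  by (simp add: LE_def)

lemma LE_sum:
  assumes "\<And>x. sc 0 x = 0" "\<And>a b x. sc (a + b) x = sc a x + sc b x"
  shows "LE sc F (sum f A) = (\<Sum>a\<in>A. LE sc F (f a))"
  by (induction A rule: infinite_finite_induct) (auto simp: LE_add[OF assms])

lemma LE_single:
  assumes "\<And>x. sc 0 x = 0"
  shows "LE sc F (Poly_Mapping.single m a) = sc a (F m)"
  using assms by (auto simp: LE_def)

lemma LE_psc:
  assumes "\<And>x. sc 0 x = 0" "\<And>a x. sc (c * a) x = g (sc a x)" "g 0 = 0" "\<And>x y. g (x + y) = g x + g y"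
  shows "LE sc F (psc c p) = g (LE sc F p)"
proof -
  have "LE sc F (psc c p) = (\<Sum>m\<in>Poly_Mapping.keys p. sc (Poly_Mapping.lookup (psc c p) m) (F m))"
    by (rule LE_superset) (use assms in \<open>auto simp: in_keys_iff\<close>)
  also have "\<dots> = (\<Sum>m\<in>Poly_Mapping.keys p. g (sc (Poly_Mapping.lookup p m) (F m)))"
    by (simp add: assms)
  also have "\<dots> = g (LE sc F p)"
    unfolding LE_def using sum_comp_morphism[of g, OF assms(3,4)] by (simp add: o_def)
  finally show ?thesis .
qed

lemma poly_expand: "p = (\<Sum>m\<in>Poly_Mapping.keys p. Poly_Mapping.single m (Poly_Mapping.lookup p m))"
proof (rule poly_mapping_eqI)
  fix k
  show "Poly_Mapping.lookup p k = Poly_Mapping.lookup (\<Sum>m\<in>Poly_Mapping.keys p. Poly_Mapping.single m (Poly_Mapping.lookup p m)) k"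
    unfolding lookup_sum by (simp add: lookup_single when_def in_keys_iff)
qed

section \<open>Substitution\<close>

fun smon :: "(gvar \<Rightarrow> 'a::field fpoly) \<Rightarrow> gvar mon \<Rightarrow> 'a fpoly" where
  "smon \<sigma> (Var v) = \<sigma> v"
| "smon \<sigma> (Mul u w) = pmul (smon \<sigma> u) (smon \<sigma> w)"

definition sub :: "(gvar \<Rightarrow> 'a::field fpoly) \<Rightarrow> 'a fpoly \<Rightarrow> 'a fpoly" where
  "sub \<sigma> = LE psc (smon \<sigma>)"

lemma sub_add: "sub \<sigma> (p + q) = sub \<sigma> p + sub \<sigma> q"
  unfolding sub_def by (rule LE_add) (auto simp: psc_add_scalar)

lemma sub_sum: "sub \<sigma> (sum f A) = (\<Sum>a\<in>A. sub \<sigma> (f a))"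
  unfolding sub_def by (rule LE_sum) (auto simp: psc_add_scalar)

lemma sub_single: "sub \<sigma> (Poly_Mapping.single m a) = psc a (smon \<sigma> m)"
  unfolding sub_def by (rule LE_single) auto

lemma sub_psc: "sub \<sigma> (psc c p) = psc c (sub \<sigma> p)"
  unfolding sub_def by (rule LE_psc) (auto simp: psc_mult psc_add)

lemma sub_mul: "sub \<sigma> (pmul p q) = pmul (sub \<sigma> p) (sub \<sigma> q)"
proof -
  have "sub \<sigma> (pmul p q) = (\<Sum>m\<in>Poly_Mapping.keys p. \<Sum>n\<in>Poly_Mapping.keys q.
      psc (Poly_Mapping.lookup p m * Poly_Mapping.lookup q n) (pmul (smon \<sigma> m) (smon \<sigma> n)))"
    unfolding pmul_def[of p q] sub_sum sub_single by (simp only: smon.simps)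
  also have "\<dots> = pmul (sub \<sigma> p) (sub \<sigma> q)"
    unfolding sub_def LE_def pmul_sum_left
    unfolding pmul_sum_right pmul_psc_left pmul_psc_right psc_mult
    by (simp add: psc_mult[symmetric] mult.commute)
  finally show ?thesis .
qed

lemma sub_pvar: "sub \<sigma> (pvar v) = \<sigma> v"
  unfolding pvar_def sub_single by simp

lemma graded_endo_sub: "(\<And>v. phom (snd v) (\<sigma> v)) \<Longrightarrow> graded_endo (sub \<sigma>)"
  unfolding graded_endo_def by (simp add: sub_add sub_psc sub_mul sub_pvar)

lemma graded_endo_is_sub:
  assumes "graded_endo \<phi>"
  shows "\<phi> p = sub (\<lambda>v. \<phi> (pvar v)) p"
proof -
  have add: "\<phi> (p + q) = \<phi> p + \<phi> q" and sc: "\<phi> (psc c p) = psc c (\<phi> p)" and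
    ml: "\<phi> (pmul p q) = pmul (\<phi> p) (\<phi> q)" for p q c
    using assms unfolding graded_endo_def by auto
  have z: "\<phi> 0 = 0" using add[of 0 0] by simp
  have sm: "\<phi> (sum f A) = (\<Sum>a\<in>A. \<phi> (f a))" for f and A :: "'b set"
    by (induction A rule: infinite_finite_induct) (auto simp: add z)
  have mon: "\<phi> (Poly_Mapping.single m 1) = smon (\<lambda>v. \<phi> (pvar v)) m" for m
  proof (induction m)
    case (Var x)
    then show ?case by (simp add: pvar_def)
  next
    case (Mul m1 m2)
    then show ?case using ml[of "Poly_Mapping.single m1 1" "Poly_Mapping.single m2 1"]
      by (simp add: pmul_single)
  qed
  have s1: "Poly_Mapping.single m a = psc a (Poly_Mapping.single m 1)" for m and a :: 'a
    by (simp add: psc_single)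
  have "\<phi> p = (\<Sum>m\<in>Poly_Mapping.keys p. \<phi> (Poly_Mapping.single m (Poly_Mapping.lookup p m)))"
    by (subst poly_expand) (simp add: sm)
  also have "\<dots> = (\<Sum>m\<in>Poly_Mapping.keys p. sub (\<lambda>v. \<phi> (pvar v)) (Poly_Mapping.single m (Poly_Mapping.lookup p m)))"
    by (intro sum.cong refl) (subst s1, simp add: sc mon sub_single)
  also have "\<dots> = sub (\<lambda>v. \<phi> (pvar v)) p"
    by (subst (2) poly_expand) (simp add: sub_sum)
  finally show ?thesis .
qed


fun bas :: "z2_3 \<Rightarrow> 'a::field \<Rightarrow> 'a oct" where
  "bas ((b1, b2), b3) s =
    (let p = (if b1 then (0, s) else (s, 0));
         q = (if b2 then (0, p) else (p, 0)) in
     if b3 then (0, q) else (q, 0))"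

fun coord :: "z2_3 \<Rightarrow> 'a::field oct \<Rightarrow> 'a" where
  "coord ((b1, b2), b3) x =
    (let q = (if b3 then snd x else fst x); c = (if b2 then snd q else fst q) in
     if b1 then snd c else fst c)"

definition kap :: "'a::field \<Rightarrow> 'a \<Rightarrow> 'a \<Rightarrow> z2_3 \<Rightarrow> z2_3 \<Rightarrow> 'a" where
  "kap \<alpha> \<beta> \<gamma> a b = coord (gadd a b) (omul \<alpha> \<beta> \<gamma> (bas a 1) (bas b 1))"

lemmas oct_defs = omul_def mul2_def mul1_def cnj2_def cnj1_def sc2_def sc1_def gadd_def Let_def zero_prod_def

lemma omul_bas0: "omul \<alpha> \<beta> \<gamma> (bas ((a1,a2),a3) s) (bas ((b1,b2),b3) r) = bas (gadd ((a1,a2),a3) ((b1,b2),b3)) (kap \<alpha> \<beta> \<gamma> ((a1,a2),a3) ((b1,b2),b3) * (s * r))"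
  unfolding kap_def
  by (cases a1; cases a2; cases a3; cases b1; cases b2; cases b3) (simp_all add: oct_defs algebra_simps)

lemma omul_bas: "omul \<alpha> \<beta> \<gamma> (bas a s) (bas b r) = bas (gadd a b) (kap \<alpha> \<beta> \<gamma> a b * (s * r))"
  using omul_bas0[of \<alpha> \<beta> \<gamma> "fst (fst a)" "snd (fst a)" "snd a" s "fst (fst b)" "snd (fst b)" "snd b" r] by simp

lemma kap_nz0: "\<alpha> \<noteq> 0 \<Longrightarrow> \<beta> \<noteq> 0 \<Longrightarrow> \<gamma> \<noteq> 0 \<Longrightarrow> kap \<alpha> \<beta> \<gamma> ((a1,a2),a3) ((b1,b2),b3) \<noteq> 0"
  unfolding kap_def
  by (cases a1; cases a2; cases a3; cases b1; cases b2; cases b3) (simp_all add: oct_defs)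

lemma kap_nz: "\<alpha> \<noteq> 0 \<Longrightarrow> \<beta> \<noteq> 0 \<Longrightarrow> \<gamma> \<noteq> 0 \<Longrightarrow> kap \<alpha> \<beta> \<gamma> a b \<noteq> 0"
  using kap_nz0[of \<alpha> \<beta> \<gamma> "fst (fst a)" "snd (fst a)" "snd a" "fst (fst b)" "snd (fst b)" "snd b"] by simp

lemma oct_cases: "(\<And>x1 x2 x3 x4 x5 x6 x7 x8. x = (((x1,x2),(x3,x4)),((x5,x6),(x7,x8))) \<Longrightarrow> P) \<Longrightarrow> P"
  by (metis prod.collapse)

lemma z2_cases: "(\<And>a1 a2 a3. a = ((a1,a2),a3) \<Longrightarrow> P) \<Longrightarrow> P"
  by (metis prod.collapse)

lemma ohom_bas: "ohom a x \<longleftrightarrow> (\<exists>s. x = bas a s)"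
  by (cases a rule: z2_cases; cases x rule: oct_cases)
     (auto simp: ohom_def hom2_def hom1_def zero_prod_def Let_def split: if_splits)

lemma coord_bas: "coord a (bas b s) = (if a = b then s else 0)"
  by (cases a rule: z2_cases; cases b rule: z2_cases) (auto simp: Let_def zero_prod_def)

lemma coord_add: "coord a (x + y) = coord a x + coord a y"
  by (cases a rule: z2_cases) (auto simp: Let_def)

lemma coord_zero[simp]: "coord a 0 = 0"
  by (cases a rule: z2_cases) (auto simp: Let_def zero_prod_def)

lemma coord_sum: "coord a (sum f A) = (\<Sum>x\<in>A. coord a (f x))"
  by (induction A rule: infinite_finite_induct) (auto simp: coord_add)

lemma bas_add: "bas a s + bas a r = bas a (s + r)"
  by (cases a rule: z2_cases) (auto simp: Let_def zero_prod_def)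

lemma bas_zero[simp]: "bas a 0 = 0"
  by (cases a rule: z2_cases) (auto simp: Let_def zero_prod_def)

lemma osc_bas: "osc c (bas a s) = bas a (c * s)"
  by (cases a rule: z2_cases) (auto simp: Let_def zero_prod_def osc_def sc2_def sc1_def)

lemmas oct_defs2 = oct_defs osc_def

lemma omul_add_left: "omul \<alpha> \<beta> \<gamma> (x + y) z = omul \<alpha> \<beta> \<gamma> x z + omul \<alpha> \<beta> \<gamma> y z"
  by (cases x rule: oct_cases; cases y rule: oct_cases; cases z rule: oct_cases) (simp add: oct_defs2 algebra_simps)
lemma omul_add_right: "omul \<alpha> \<beta> \<gamma> z (x + y) = omul \<alpha> \<beta> \<gamma> z x + omul \<alpha> \<beta> \<gamma> z y"
  by (cases x rule: oct_cases; cases y rule: oct_cases; cases z rule: oct_cases) (simp add: oct_defs2 algebra_simps)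
lemma omul_osc_left: "omul \<alpha> \<beta> \<gamma> (osc c x) z = osc c (omul \<alpha> \<beta> \<gamma> x z)"
  by (cases x rule: oct_cases; cases z rule: oct_cases) (simp add: oct_defs2 algebra_simps)
lemma omul_osc_right: "omul \<alpha> \<beta> \<gamma> z (osc c x) = osc c (omul \<alpha> \<beta> \<gamma> z x)"
  by (cases x rule: oct_cases; cases z rule: oct_cases) (simp add: oct_defs2 algebra_simps)
lemma omul_zero[simp]: "omul \<alpha> \<beta> \<gamma> 0 z = 0" "omul \<alpha> \<beta> \<gamma> z 0 = 0"
  by (cases z rule: oct_cases, simp add: oct_defs2)+
lemma osc_add: "osc c (x + y) = osc c x + osc c y"
  by (cases x rule: oct_cases; cases y rule: oct_cases) (simp add: oct_defs2 algebra_simps)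
lemma osc_add_scalar: "osc (a + b) x = osc a x + osc b x"
  by (cases x rule: oct_cases) (simp add: oct_defs2 algebra_simps)
lemma osc_mult: "osc (a * b) x = osc a (osc b x)"
  by (cases x rule: oct_cases) (simp add: oct_defs2 algebra_simps)
lemma osc_0[simp]: "osc 0 x = 0" "osc c 0 = 0"
  by (cases x rule: oct_cases, simp add: oct_defs2)+


lemma gadd_assoc: "gadd (gadd x y) z = gadd x (gadd y z)"
  by (auto simp: gadd_def)
lemma gadd_comm: "gadd x y = gadd y x"
  by (auto simp: gadd_def)
lemma gadd_left_comm: "gadd x (gadd y z) = gadd y (gadd x z)"
  by (auto simp: gadd_def)
lemma gadd_self[simp]: "gadd x x = gzero"
  by (auto simp: gadd_def gzero_def)
lemma gadd_left_self[simp]: "gadd x (gadd x y) = y"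
  by (auto simp: gadd_def prod_eq_iff)
lemma gadd_zero[simp]: "gadd gzero x = x" "gadd x gzero = x"
  by (auto simp: gadd_def gzero_def)

lemmas gadd_ac = gadd_assoc gadd_comm gadd_left_comm

lemma gen3: "gen_subgroup {a, b, c} = {gzero, a, b, c, gadd a b, gadd a c, gadd b c, gadd (gadd a b) c}"
proof
  show "gen_subgroup {a, b, c} \<subseteq> {gzero, a, b, c, gadd a b, gadd a c, gadd b c, gadd (gadd a b) c}"
  proof
    fix x assume "x \<in> gen_subgroup {a, b, c}"
    then show "x \<in> {gzero, a, b, c, gadd a b, gadd a c, gadd b c, gadd (gadd a b) c}"
    proof induction
      case (gen_add x y)
      from gen_add.IH show ?case
        by (simp only: insert_iff empty_iff) (elim disjE; simp add: gadd_ac)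
    qed auto
  qed
  show "{gzero, a, b, c, gadd a b, gadd a c, gadd b c, gadd (gadd a b) c} \<subseteq> gen_subgroup {a, b, c}"
  proof -
    have "a \<in> gen_subgroup {a, b, c}" "b \<in> gen_subgroup {a, b, c}" "c \<in> gen_subgroup {a, b, c}"
      by (auto intro: gen_subgroup.gen_base)
    then show ?thesis by (simp add: gen_subgroup.gen_add gen_subgroup.gen_zero)
  qed
qed

lemma gen2: "gen_subgroup {a, b} = {gzero, a, b, gadd a b}"
  using gen3[of a b b] by (simp add: gadd_ac) auto


lemma card_z2: "card (UNIV :: z2_3 set) = 8"
  by (simp add: UNIV_Times_UNIV[symmetric] card_cartesian_product del: UNIV_Times_UNIV)

lemma gdich2_0: "card {gzero, ((a1,a2),a3), ((b1,b2),b3), gadd ((a1,a2),a3) ((b1,b2),b3)} \<le> 2 \<or> card {gzero, ((a1,a2),a3), ((b1,b2),b3), gadd ((a1,a2),a3) ((b1,b2),b3)} \<ge> 4"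
  by (cases a1; cases a2; cases a3; cases b1; cases b2; cases b3) (simp_all add: gadd_def gzero_def card_insert_if)

lemma kap_comm0: "card {gzero, ((a1,a2),a3), ((b1,b2),b3), gadd ((a1,a2),a3) ((b1,b2),b3)} \<le> 2 \<Longrightarrow>
   kap \<alpha> \<beta> \<gamma> ((a1,a2),a3) ((b1,b2),b3) = kap \<alpha> \<beta> \<gamma> ((b1,b2),b3) ((a1,a2),a3)"
  unfolding kap_def
  by (cases a1; cases a2; cases a3; cases b1; cases b2; cases b3) (simp_all add: oct_defs gzero_def card_insert_if)

lemma kap_anti0: "card {gzero, ((a1,a2),a3), ((b1,b2),b3), gadd ((a1,a2),a3) ((b1,b2),b3)} \<ge> 4 \<Longrightarrow>
   kap \<alpha> \<beta> \<gamma> ((a1,a2),a3) ((b1,b2),b3) = - kap \<alpha> \<beta> \<gamma> ((b1,b2),b3) ((a1,a2),a3)"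
  unfolding kap_def
  by (cases a1; cases a2; cases a3; cases b1; cases b2; cases b3) (simp_all add: oct_defs gzero_def card_insert_if)

lemma gdich3_0: "card {gzero, ((a1,a2),a3), ((b1,b2),b3), ((c1,c2),c3), gadd ((a1,a2),a3) ((b1,b2),b3), gadd ((a1,a2),a3) ((c1,c2),c3), gadd ((b1,b2),b3) ((c1,c2),c3), gadd (gadd ((a1,a2),a3) ((b1,b2),b3)) ((c1,c2),c3)} \<le> 4 \<or> card {gzero, ((a1,a2),a3), ((b1,b2),b3), ((c1,c2),c3), gadd ((a1,a2),a3) ((b1,b2),b3), gadd ((a1,a2),a3) ((c1,c2),c3), gadd ((b1,b2),b3) ((c1,c2),c3), gadd (gadd ((a1,a2),a3) ((b1,b2),b3)) ((c1,c2),c3)} = 8"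
  by (cases a1; cases a2; cases a3; cases b1; cases b2; cases b3; cases c1; cases c2; cases c3) (simp_all add: gadd_def gzero_def card_insert_if)

lemma kap_assoc0: "card {gzero, ((a1,a2),a3), ((b1,b2),b3), ((c1,c2),c3), gadd ((a1,a2),a3) ((b1,b2),b3), gadd ((a1,a2),a3) ((c1,c2),c3), gadd ((b1,b2),b3) ((c1,c2),c3), gadd (gadd ((a1,a2),a3) ((b1,b2),b3)) ((c1,c2),c3)} \<le> 4 \<Longrightarrow>
   kap \<alpha> \<beta> \<gamma> ((a1,a2),a3) ((b1,b2),b3) * kap \<alpha> \<beta> \<gamma> (gadd ((a1,a2),a3) ((b1,b2),b3)) ((c1,c2),c3) = kap \<alpha> \<beta> \<gamma> ((b1,b2),b3) ((c1,c2),c3) * kap \<alpha> \<beta> \<gamma> ((a1,a2),a3) (gadd ((b1,b2),b3) ((c1,c2),c3))"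
  unfolding kap_def
  by (cases a1; cases a2; cases a3; cases b1; cases b2; cases b3; cases c1; cases c2; cases c3) (simp_all add: oct_defs gzero_def card_insert_if)

lemma kap_antiassoc0: "card {gzero, ((a1,a2),a3), ((b1,b2),b3), ((c1,c2),c3), gadd ((a1,a2),a3) ((b1,b2),b3), gadd ((a1,a2),a3) ((c1,c2),c3), gadd ((b1,b2),b3) ((c1,c2),c3), gadd (gadd ((a1,a2),a3) ((b1,b2),b3)) ((c1,c2),c3)} = 8 \<Longrightarrow>
   kap \<alpha> \<beta> \<gamma> ((a1,a2),a3) ((b1,b2),b3) * kap \<alpha> \<beta> \<gamma> (gadd ((a1,a2),a3) ((b1,b2),b3)) ((c1,c2),c3) = - (kap \<alpha> \<beta> \<gamma> ((b1,b2),b3) ((c1,c2),c3) * kap \<alpha> \<beta> \<gamma> ((a1,a2),a3) (gadd ((b1,b2),b3) ((c1,c2),c3)))"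
  unfolding kap_def
  by (cases a1; cases a2; cases a3; cases b1; cases b2; cases b3; cases c1; cases c2; cases c3) (simp_all add: oct_defs gzero_def card_insert_if)

lemma gdich2: "card (gen_subgroup {a,b}) \<le> 2 \<or> card (gen_subgroup {a,b}) \<ge> 4"
  by (cases a rule: z2_cases; cases b rule: z2_cases) (hypsubst, unfold gen2, rule gdich2_0)

lemma kap_comm: "card (gen_subgroup {a,b}) \<le> 2 \<Longrightarrow> kap \<alpha> \<beta> \<gamma> a b = kap \<alpha> \<beta> \<gamma> b a"
  by (cases a rule: z2_cases; cases b rule: z2_cases) (hypsubst, unfold gen2, erule kap_comm0)

lemma kap_anti: "card (gen_subgroup {a,b}) \<ge> 4 \<Longrightarrow> kap \<alpha> \<beta> \<gamma> a b = - kap \<alpha> \<beta> \<gamma> b a"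
  by (cases a rule: z2_cases; cases b rule: z2_cases) (hypsubst, unfold gen2, erule kap_anti0)

lemma gdich3': "card (gen_subgroup {a,b,c}) \<le> 4 \<or> card (gen_subgroup {a,b,c}) = 8"
  by (cases a rule: z2_cases; cases b rule: z2_cases; cases c rule: z2_cases) (hypsubst, unfold gen3, rule gdich3_0)

lemma gdich3: "card (gen_subgroup {a,b,c}) \<le> 4 \<or> gen_subgroup {a,b,c} = UNIV"
proof -
  have "card (gen_subgroup {a,b,c}) = 8 \<Longrightarrow> gen_subgroup {a,b,c} = UNIV"
    by (rule card_subset_eq) (auto simp: card_z2)
  then show ?thesis using gdich3' by blast
qed

lemma kap_assoc: "card (gen_subgroup {a,b,c}) \<le> 4 \<Longrightarrow>
  kap \<alpha> \<beta> \<gamma> a b * kap \<alpha> \<beta> \<gamma> (gadd a b) c = kap \<alpha> \<beta> \<gamma> b c * kap \<alpha> \<beta> \<gamma> a (gadd b c)"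
  by (cases a rule: z2_cases; cases b rule: z2_cases; cases c rule: z2_cases) (hypsubst, unfold gen3, erule kap_assoc0)

lemma kap_antiassoc: "gen_subgroup {a,b,c} = UNIV \<Longrightarrow>
  kap \<alpha> \<beta> \<gamma> a b * kap \<alpha> \<beta> \<gamma> (gadd a b) c = - (kap \<alpha> \<beta> \<gamma> b c * kap \<alpha> \<beta> \<gamma> a (gadd b c))"
proof -
  assume "gen_subgroup {a,b,c} = UNIV"
  then have "card (gen_subgroup {a,b,c}) = 8" by (simp add: card_z2)
  then show ?thesis
    by (cases a rule: z2_cases; cases b rule: z2_cases; cases c rule: z2_cases) (hypsubst, unfold gen3, erule kap_antiassoc0)
qed


context
  fixes \<alpha> \<beta> \<gamma> :: "'a::field"
begin

lemma osc_1[simp]: "osc 1 x = x"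
  by (cases x rule: oct_cases) (simp add: oct_defs2)
lemma osc_m1: "osc (-1) x = - x"
  by (cases x rule: oct_cases) (simp add: oct_defs2)

lemma omul_sum_left: "omul \<alpha> \<beta> \<gamma> (sum f A) r = (\<Sum>a\<in>A. omul \<alpha> \<beta> \<gamma> (f a) r)"
  by (induction A rule: infinite_finite_induct) (auto simp: omul_add_left)
lemma omul_sum_right: "omul \<alpha> \<beta> \<gamma> r (sum f A) = (\<Sum>a\<in>A. omul \<alpha> \<beta> \<gamma> r (f a))"
  by (induction A rule: infinite_finite_induct) (auto simp: omul_add_right)
lemma osc_sum: "osc c (sum f A) = (\<Sum>a\<in>A. osc c (f a))"
  by (induction A rule: infinite_finite_induct) (auto simp: osc_add)

lemma oeval_LE: "oeval \<alpha> \<beta> \<gamma> \<nu> p = LE osc (oeval_mon \<alpha> \<beta> \<gamma> \<nu>) p"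
  by (simp add: oeval_def LE_def)

lemma oeval_add: "oeval \<alpha> \<beta> \<gamma> \<nu> (p + q) = oeval \<alpha> \<beta> \<gamma> \<nu> p + oeval \<alpha> \<beta> \<gamma> \<nu> q"
  unfolding oeval_LE by (rule LE_add) (auto simp: osc_add_scalar)

lemma oeval_zero[simp]: "oeval \<alpha> \<beta> \<gamma> \<nu> 0 = 0"
  unfolding oeval_LE by simp

lemma oeval_sum: "oeval \<alpha> \<beta> \<gamma> \<nu> (sum f A) = (\<Sum>a\<in>A. oeval \<alpha> \<beta> \<gamma> \<nu> (f a))"
  unfolding oeval_LE by (rule LE_sum) (auto simp: osc_add_scalar)

lemma oeval_single: "oeval \<alpha> \<beta> \<gamma> \<nu> (Poly_Mapping.single m a) = osc a (oeval_mon \<alpha> \<beta> \<gamma> \<nu> m)"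
  unfolding oeval_LE by (rule LE_single) auto

lemma oeval_psc: "oeval \<alpha> \<beta> \<gamma> \<nu> (psc c p) = osc c (oeval \<alpha> \<beta> \<gamma> \<nu> p)"
  unfolding oeval_LE by (rule LE_psc) (auto simp: osc_mult osc_add)

lemma oeval_diff: "oeval \<alpha> \<beta> \<gamma> \<nu> (p - q) = oeval \<alpha> \<beta> \<gamma> \<nu> p - oeval \<alpha> \<beta> \<gamma> \<nu> q"
proof -
  have e: "p - q = p + psc (-1) q" by (simp add: psc_m1)
  show ?thesis unfolding e by (simp only: oeval_add oeval_psc osc_m1) simp
qed

lemma oeval_pvar: "oeval \<alpha> \<beta> \<gamma> \<nu> (pvar v) = \<nu> v"
  by (simp add: pvar_def oeval_single)

lemma oeval_pmul: "oeval \<alpha> \<beta> \<gamma> \<nu> (pmul p q) = omul \<alpha> \<beta> \<gamma> (oeval \<alpha> \<beta> \<gamma> \<nu> p) (oeval \<alpha> \<beta> \<gamma> \<nu> q)"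
proof -
  have "oeval \<alpha> \<beta> \<gamma> \<nu> (pmul p q) = (\<Sum>m\<in>Poly_Mapping.keys p. \<Sum>n\<in>Poly_Mapping.keys q.
      osc (Poly_Mapping.lookup p m * Poly_Mapping.lookup q n) (omul \<alpha> \<beta> \<gamma> (oeval_mon \<alpha> \<beta> \<gamma> \<nu> m) (oeval_mon \<alpha> \<beta> \<gamma> \<nu> n)))"
    unfolding pmul_def[of p q] oeval_sum oeval_single by (simp only: oeval_mon.simps)
  also have "\<dots> = omul \<alpha> \<beta> \<gamma> (oeval \<alpha> \<beta> \<gamma> \<nu> p) (oeval \<alpha> \<beta> \<gamma> \<nu> q)"
    unfolding oeval_def omul_sum_left
    unfolding omul_sum_right omul_osc_left omul_osc_right osc_mult
    by (simp add: osc_mult[symmetric] mult.commute osc_sum)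
  finally show ?thesis .
qed

lemma oeval_smon: "oeval \<alpha> \<beta> \<gamma> \<nu> (smon \<sigma> m) = oeval_mon \<alpha> \<beta> \<gamma> (\<lambda>v. oeval \<alpha> \<beta> \<gamma> \<nu> (\<sigma> v)) m"
  by (induction m) (auto simp: oeval_pmul)

lemma oeval_sub: "oeval \<alpha> \<beta> \<gamma> \<nu> (sub \<sigma> p) = oeval \<alpha> \<beta> \<gamma> (\<lambda>v. oeval \<alpha> \<beta> \<gamma> \<nu> (\<sigma> v)) p"
  unfolding sub_def LE_def oeval_sum oeval_psc oeval_smon
  by (simp add: oeval_def)

lemma mon_hom: "(\<And>v. ohom (snd v) (\<nu> v)) \<Longrightarrow> ohom (mdeg m) (oeval_mon \<alpha> \<beta> \<gamma> \<nu> m)"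
  by (induction m) (auto simp: ohom_bas omul_bas)

lemma bas_sum: "(\<Sum>x\<in>A. bas a (f x)) = bas a (sum f A)"
  by (induction A rule: infinite_finite_induct) (auto simp: bas_add)

lemma eval_hom:
  assumes "\<And>v. ohom (snd v) (\<nu> v)" "phom a p"
  shows "ohom a (oeval \<alpha> \<beta> \<gamma> \<nu> p)"
proof -
  have "\<forall>m\<in>Poly_Mapping.keys p. \<exists>s. oeval_mon \<alpha> \<beta> \<gamma> \<nu> m = bas a s"
    using mon_hom[OF assms(1)] assms(2) unfolding phom_def ohom_bas by metis
  then obtain S where S: "\<And>m. m \<in> Poly_Mapping.keys p \<Longrightarrow> oeval_mon \<alpha> \<beta> \<gamma> \<nu> m = bas a (S m)"
    by metis
  have "oeval \<alpha> \<beta> \<gamma> \<nu> p = (\<Sum>m\<in>Poly_Mapping.keys p. bas a (Poly_Mapping.lookup p m * S m))"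
    unfolding oeval_def by (intro sum.cong refl) (simp add: S osc_bas)
  then have "oeval \<alpha> \<beta> \<gamma> \<nu> p = bas a (\<Sum>m\<in>Poly_Mapping.keys p. Poly_Mapping.lookup p m * S m)"
    by (simp only: bas_sum)
  then show ?thesis using ohom_bas by blast
qed

lemma T_oct_graded: "graded_T_ideal (T_oct \<alpha> \<beta> \<gamma>)"
  unfolding graded_T_ideal_def ideal_fp_def
proof (intro conjI ballI allI impI subsetI)
  show "0 \<in> T_oct \<alpha> \<beta> \<gamma>" by (simp add: T_oct_def)
  show "p + q \<in> T_oct \<alpha> \<beta> \<gamma>" if "p \<in> T_oct \<alpha> \<beta> \<gamma>" "q \<in> T_oct \<alpha> \<beta> \<gamma>" for p q
    using that by (simp add: T_oct_def oeval_add)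
  show "psc c p \<in> T_oct \<alpha> \<beta> \<gamma>" if "p \<in> T_oct \<alpha> \<beta> \<gamma>" for p c
    using that by (simp add: T_oct_def oeval_psc)
  show "pmul p q \<in> T_oct \<alpha> \<beta> \<gamma>" if "p \<in> T_oct \<alpha> \<beta> \<gamma>" for p q
    using that by (simp add: T_oct_def oeval_pmul)
  show "pmul q p \<in> T_oct \<alpha> \<beta> \<gamma>" if "p \<in> T_oct \<alpha> \<beta> \<gamma>" for p q
    using that by (simp add: T_oct_def oeval_pmul)
  fix \<phi> :: "'a fpoly \<Rightarrow> 'a fpoly" and x
  assume ge: "graded_endo \<phi>" and x: "x \<in> \<phi> ` T_oct \<alpha> \<beta> \<gamma>"
  then obtain f where f: "f \<in> T_oct \<alpha> \<beta> \<gamma>" "x = \<phi> f" by auto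
  show "x \<in> T_oct \<alpha> \<beta> \<gamma>"
    unfolding T_oct_def
  proof (intro CollectI allI impI)
    fix \<nu> :: "gvar \<Rightarrow> 'a oct" assume h: "\<forall>v. ohom (snd v) (\<nu> v)"
    have h2: "ohom (snd v) (oeval \<alpha> \<beta> \<gamma> \<nu> (\<phi> (pvar v)))" for v
      using eval_hom[of \<nu> "snd v" "\<phi> (pvar v)"] h ge unfolding graded_endo_def by auto
    have "oeval \<alpha> \<beta> \<gamma> \<nu> x = oeval \<alpha> \<beta> \<gamma> (\<lambda>v. oeval \<alpha> \<beta> \<gamma> \<nu> (\<phi> (pvar v))) f"
      using f(2) graded_endo_is_sub[OF ge, of f] oeval_sub by simp
    also have "\<dots> = 0"
    proof -
      have "\<forall>v. ohom (snd v) ((\<lambda>v. oeval \<alpha> \<beta> \<gamma> \<nu> (\<phi> (pvar v))) v)" using h2 by simp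
      then show ?thesis using f(1) unfolding T_oct_def mem_Collect_eq by (rule_tac mp[OF spec[OF f(1)[unfolded T_oct_def mem_Collect_eq]]])
    qed
    finally show "oeval \<alpha> \<beta> \<gamma> \<nu> x = 0" .
  qed
qed

lemma hom_var: "\<forall>v. ohom (snd v) (\<nu> v) \<Longrightarrow> \<exists>s. \<nu> v = bas (snd v) s"
  by (metis ohom_bas)

lemma gens_in_T_oct: "oct_gens \<subseteq> T_oct \<alpha> \<beta> \<gamma>"
proof
  fix f :: "'a fpoly" assume "f \<in> oct_gens"
  then consider
      (c) u v where "f = pcomm (pvar u) (pvar v)" "card (gen_subgroup {snd u, snd v}) \<le> 2"
    | (j) u v where "f = pjordan (pvar u) (pvar v)" "card (gen_subgroup {snd u, snd v}) \<ge> 4"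
    | (a) u v w where "f = passoc (pvar u) (pvar v) (pvar w)" "card (gen_subgroup {snd u, snd v, snd w}) \<le> 4"
    | (n) u v w where "f = pmul (pmul (pvar u) (pvar v)) (pvar w) + pmul (pvar u) (pmul (pvar v) (pvar w))"
        "gen_subgroup {snd u, snd v, snd w} = UNIV"
    unfolding oct_gens_def by blast
  then show "f \<in> T_oct \<alpha> \<beta> \<gamma>"
  proof cases
    case c
    show ?thesis unfolding T_oct_def
    proof (intro CollectI allI impI)
      fix \<nu> :: "gvar \<Rightarrow> 'a oct" assume h: "\<forall>v. ohom (snd v) (\<nu> v)"
      obtain s r where sr: "\<nu> u = bas (snd u) s" "\<nu> v = bas (snd v) r" using hom_var[OF h] by metis
      show "oeval \<alpha> \<beta> \<gamma> \<nu> f = 0"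
        using kap_comm[OF c(2), of \<alpha> \<beta> \<gamma>]
        by (simp add: c(1) pcomm_def oeval_diff oeval_pmul oeval_pvar sr omul_bas gadd_comm[of "snd v" "snd u"] mult.commute)
    qed
  next
    case j
    show ?thesis unfolding T_oct_def
    proof (intro CollectI allI impI)
      fix \<nu> :: "gvar \<Rightarrow> 'a oct" assume h: "\<forall>v. ohom (snd v) (\<nu> v)"
      obtain s r where sr: "\<nu> u = bas (snd u) s" "\<nu> v = bas (snd v) r" using hom_var[OF h] by metis
      show "oeval \<alpha> \<beta> \<gamma> \<nu> f = 0"
        using kap_anti[OF j(2), of \<alpha> \<beta> \<gamma>]
        by (simp add: j(1) pjordan_def oeval_add oeval_pmul oeval_pvar sr omul_bas gadd_comm[of "snd v" "snd u"] bas_add mult.commute)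
    qed
  next
    case a
    show ?thesis unfolding T_oct_def
    proof (intro CollectI allI impI)
      fix \<nu> :: "gvar \<Rightarrow> 'a oct" assume h: "\<forall>v. ohom (snd v) (\<nu> v)"
      obtain s r t where sr: "\<nu> u = bas (snd u) s" "\<nu> v = bas (snd v) r" "\<nu> w = bas (snd w) t"
        using hom_var[OF h] by metis
      have H: "kap \<alpha> \<beta> \<gamma> (snd u) (snd v) * kap \<alpha> \<beta> \<gamma> (gadd (snd u) (snd v)) (snd w) =
        kap \<alpha> \<beta> \<gamma> (snd v) (snd w) * kap \<alpha> \<beta> \<gamma> (snd u) (gadd (snd v) (snd w))"
        by (rule kap_assoc[OF a(2)])
      have E: "kap \<alpha> \<beta> \<gamma> (gadd (snd u) (snd v)) (snd w) * (kap \<alpha> \<beta> \<gamma> (snd u) (snd v) * (s * r) * t) =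
         kap \<alpha> \<beta> \<gamma> (snd u) (gadd (snd v) (snd w)) * (s * (kap \<alpha> \<beta> \<gamma> (snd v) (snd w) * (r * t)))"
      proof -
        have "kap \<alpha> \<beta> \<gamma> (gadd (snd u) (snd v)) (snd w) * (kap \<alpha> \<beta> \<gamma> (snd u) (snd v) * (s * r) * t)
          = (kap \<alpha> \<beta> \<gamma> (snd u) (snd v) * kap \<alpha> \<beta> \<gamma> (gadd (snd u) (snd v)) (snd w)) * (s * r * t)"
          by (simp only: mult_ac)
        also have "\<dots> = (kap \<alpha> \<beta> \<gamma> (snd v) (snd w) * kap \<alpha> \<beta> \<gamma> (snd u) (gadd (snd v) (snd w))) * (s * r * t)"
          by (simp only: H)
        finally show ?thesis by (simp only: mult_ac)
      qed
      show "oeval \<alpha> \<beta> \<gamma> \<nu> f = 0"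
        by (simp add: a(1) passoc_def oeval_diff oeval_pmul oeval_pvar sr omul_bas gadd_assoc E)
    qed
  next
    case n
    show ?thesis unfolding T_oct_def
    proof (intro CollectI allI impI)
      fix \<nu> :: "gvar \<Rightarrow> 'a oct" assume h: "\<forall>v. ohom (snd v) (\<nu> v)"
      obtain s r t where sr: "\<nu> u = bas (snd u) s" "\<nu> v = bas (snd v) r" "\<nu> w = bas (snd w) t"
        using hom_var[OF h] by metis
      have H: "kap \<alpha> \<beta> \<gamma> (snd u) (snd v) * kap \<alpha> \<beta> \<gamma> (gadd (snd u) (snd v)) (snd w) =
        - (kap \<alpha> \<beta> \<gamma> (snd v) (snd w) * kap \<alpha> \<beta> \<gamma> (snd u) (gadd (snd v) (snd w)))"
        by (rule kap_antiassoc[OF n(2)])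
      have E: "kap \<alpha> \<beta> \<gamma> (gadd (snd u) (snd v)) (snd w) * (kap \<alpha> \<beta> \<gamma> (snd u) (snd v) * (s * r) * t) +
         kap \<alpha> \<beta> \<gamma> (snd u) (gadd (snd v) (snd w)) * (s * (kap \<alpha> \<beta> \<gamma> (snd v) (snd w) * (r * t))) = 0"
      proof -
        have "kap \<alpha> \<beta> \<gamma> (gadd (snd u) (snd v)) (snd w) * (kap \<alpha> \<beta> \<gamma> (snd u) (snd v) * (s * r) * t)
          = (kap \<alpha> \<beta> \<gamma> (snd u) (snd v) * kap \<alpha> \<beta> \<gamma> (gadd (snd u) (snd v)) (snd w)) * (s * r * t)"
          by (simp only: mult_ac)
        also have "\<dots> = - (kap \<alpha> \<beta> \<gamma> (snd v) (snd w) * kap \<alpha> \<beta> \<gamma> (snd u) (gadd (snd v) (snd w))) * (s * r * t)"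
          by (simp only: H)
        finally show ?thesis by (simp add: algebra_simps)
      qed
      show "oeval \<alpha> \<beta> \<gamma> \<nu> f = 0"
        by (simp add: n(1) oeval_add oeval_pmul oeval_pvar sr omul_bas gadd_assoc bas_add E)
    qed
  qed
qed

end


lemma gT_zero: "graded_T_ideal I \<Longrightarrow> 0 \<in> I"
  unfolding graded_T_ideal_def ideal_fp_def by simp
lemma gT_add: "graded_T_ideal I \<Longrightarrow> p \<in> I \<Longrightarrow> q \<in> I \<Longrightarrow> p + q \<in> I"
  unfolding graded_T_ideal_def ideal_fp_def by simp
lemma gT_psc: "graded_T_ideal I \<Longrightarrow> p \<in> I \<Longrightarrow> psc c p \<in> I"
  unfolding graded_T_ideal_def ideal_fp_def by simp
lemma gT_mul: "graded_T_ideal I \<Longrightarrow> p \<in> I \<Longrightarrow> pmul p q \<in> I"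
  unfolding graded_T_ideal_def ideal_fp_def by simp
lemma gT_mul2: "graded_T_ideal I \<Longrightarrow> p \<in> I \<Longrightarrow> pmul q p \<in> I"
  unfolding graded_T_ideal_def ideal_fp_def by simp
lemma gT_endo: "graded_T_ideal I \<Longrightarrow> graded_endo \<phi> \<Longrightarrow> p \<in> I \<Longrightarrow> \<phi> p \<in> I"
  unfolding graded_T_ideal_def by blast

lemma TG_graded: "graded_T_ideal (T_generated S)"
proof -
  let ?F = "{I. graded_T_ideal I \<and> S \<subseteq> I}"
  have T: "T_generated S = \<Inter> ?F" by (simp add: T_generated_def)
  have P: "graded_T_ideal I" if "I \<in> ?F" for I using that by blast
  have "ideal_fp (\<Inter> ?F)"
    unfolding ideal_fp_def
    by (intro conjI ballI allI; simp only: Inter_iff; intro ballI)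
       (auto intro: gT_zero gT_add gT_psc gT_mul gT_mul2 dest: P)
  moreover have "\<phi> ` (\<Inter> ?F) \<subseteq> \<Inter> ?F" if "graded_endo \<phi>" for \<phi>
    using that by (auto intro: gT_endo dest: P)
  ultimately show ?thesis unfolding T graded_T_ideal_def by blast
qed

lemma TG_sub: "S \<subseteq> T_generated S"
  unfolding T_generated_def by blast

lemma TG_least: "graded_T_ideal J \<Longrightarrow> S \<subseteq> J \<Longrightarrow> T_generated S \<subseteq> J"
  unfolding T_generated_def by blast

definition relI :: "'a::field fpoly set \<Rightarrow> gvar mon \<Rightarrow> gvar mon \<Rightarrow> bool" where
  "relI I m n = (\<exists>c. c \<noteq> 0 \<and> Poly_Mapping.single m 1 - Poly_Mapping.single n c \<in> I)"

lemma sub_diff: "sub \<sigma> (p - q) = sub \<sigma> p - sub \<sigma> q"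
proof -
  have e: "p - q = p + psc (-1) q" by (simp add: psc_m1)
  have "sub \<sigma> (p - q) = sub \<sigma> (p + psc (-1) q)" by (simp only: e)
  also have "\<dots> = sub \<sigma> p + psc (-1) (sub \<sigma> q)" by (simp only: sub_add sub_psc)
  also have "\<dots> = sub \<sigma> p - sub \<sigma> q" by (simp add: psc_m1)
  finally show ?thesis .
qed

lemma phom_single: "phom (mdeg m) (Poly_Mapping.single m c)"
  by (simp add: phom_def)

locale Iloc =
  fixes I :: "'a::field fpoly set"
  assumes gI: "graded_T_ideal I" and gens: "oct_gens \<subseteq> I"
begin

lemma I_add: "p \<in> I \<Longrightarrow> q \<in> I \<Longrightarrow> p + q \<in> I"
  using gI by (rule gT_add)
lemma I_psc: "p \<in> I \<Longrightarrow> psc c p \<in> I"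
  using gI by (rule gT_psc)
lemma I_zero: "0 \<in> I"
  using gI by (rule gT_zero)
lemma I_mul1: "p \<in> I \<Longrightarrow> pmul p q \<in> I"
  using gI by (rule gT_mul)
lemma I_mul2: "p \<in> I \<Longrightarrow> pmul q p \<in> I"
  using gI by (rule gT_mul2)
lemmas I_mul = I_mul1 I_mul2
lemma I_endo: "graded_endo \<phi> \<Longrightarrow> p \<in> I \<Longrightarrow> \<phi> p \<in> I"
  using gI by (rule gT_endo)
lemma I_diff: "p \<in> I \<Longrightarrow> q \<in> I \<Longrightarrow> p - q \<in> I"
proof -
  assume "p \<in> I" "q \<in> I"
  then have "p + psc (-1) q \<in> I" by (intro I_add I_psc)
  then show ?thesis by (simp add: psc_m1)
qed

abbreviation "rel \<equiv> relI I"

lemma rel_refl: "rel m m"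
  unfolding relI_def using I_zero by (intro exI[of _ 1]) simp

lemma rel_sym: "rel m n \<Longrightarrow> rel n m"
proof -
  assume "rel m n"
  then obtain c where c: "c \<noteq> 0" "Poly_Mapping.single m 1 - Poly_Mapping.single n c \<in> I"
    unfolding relI_def by blast
  have "psc (- 1 / c) (Poly_Mapping.single m 1 - Poly_Mapping.single n c) = Poly_Mapping.single n 1 - Poly_Mapping.single m (1 / c)"
  proof (intro poly_mapping_eqI)
    fix k show "Poly_Mapping.lookup (psc (- 1 / c) (Poly_Mapping.single m 1 - Poly_Mapping.single n c)) k =
          Poly_Mapping.lookup (Poly_Mapping.single n 1 - Poly_Mapping.single m (1 / c)) k"
      using c(1) by (cases "m = k"; cases "n = k") (simp_all add: lookup_minus lookup_single field_simps)
  qed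
  moreover have "psc (- 1 / c) (Poly_Mapping.single m 1 - Poly_Mapping.single n c) \<in> I"
    by (rule I_psc[OF c(2)])
  ultimately show ?thesis unfolding relI_def using c(1)
    by (intro exI[of _ "1 / c"]) auto
qed

lemma rel_trans: "rel m n \<Longrightarrow> rel n k \<Longrightarrow> rel m k"
proof -
  assume "rel m n" "rel n k"
  then obtain c d where c: "c \<noteq> 0" "Poly_Mapping.single m 1 - Poly_Mapping.single n c \<in> I"
     and d: "d \<noteq> 0" "Poly_Mapping.single n 1 - Poly_Mapping.single k d \<in> I"
    unfolding relI_def by blast
  have "(Poly_Mapping.single m 1 - Poly_Mapping.single n c) + psc c (Poly_Mapping.single n 1 - Poly_Mapping.single k d)
     = Poly_Mapping.single m 1 - Poly_Mapping.single k (c * d)"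
  proof (intro poly_mapping_eqI)
    fix k' show "Poly_Mapping.lookup ((Poly_Mapping.single m 1 - Poly_Mapping.single n c) + psc c (Poly_Mapping.single n 1 - Poly_Mapping.single k d)) k' =
      Poly_Mapping.lookup (Poly_Mapping.single m 1 - Poly_Mapping.single k (c * d)) k'"
      by (cases "m = k'"; cases "n = k'"; cases "k = k'") (simp_all add: lookup_minus lookup_add lookup_single algebra_simps)
  qed
  note eq = this
  have mem: "(Poly_Mapping.single m 1 - Poly_Mapping.single n c) + psc c (Poly_Mapping.single n 1 - Poly_Mapping.single k d) \<in> I"
    by (rule I_add[OF c(2) I_psc[OF d(2)]])
  show ?thesis unfolding relI_def using c(1) d(1) mem[unfolded eq]
    by (intro exI[of _ "c * d"]) auto
qed

lemma rel_cong: "rel m n \<Longrightarrow> rel (Mul m k) (Mul n k) \<and> rel (Mul k m) (Mul k n)"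
proof -
  assume "rel m n"
  then obtain c where c: "c \<noteq> 0" "Poly_Mapping.single m 1 - Poly_Mapping.single n c \<in> I"
    unfolding relI_def by blast
  have "pmul (Poly_Mapping.single m 1 - Poly_Mapping.single n c) (Poly_Mapping.single k 1) =
    Poly_Mapping.single (Mul m k) 1 - Poly_Mapping.single (Mul n k) c"
    "pmul (Poly_Mapping.single k 1) (Poly_Mapping.single m 1 - Poly_Mapping.single n c) =
    Poly_Mapping.single (Mul k m) 1 - Poly_Mapping.single (Mul k n) c"
    by (simp_all add: pmul_diff_left pmul_diff_right pmul_single)
  then show ?thesis unfolding relI_def using I_mul[OF c(2)] c(1) by metis
qed

lemma rel_congL: "rel m n \<Longrightarrow> rel (Mul m k) (Mul n k)" using rel_cong by blast
lemma rel_congR: "rel m n \<Longrightarrow> rel (Mul k m) (Mul k n)" using rel_cong by blast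

definition sig :: "(gvar \<times> gvar mon) list \<Rightarrow> gvar \<Rightarrow> 'a fpoly" where
  "sig l v = (case map_of l v of Some m \<Rightarrow> Poly_Mapping.single m 1 | None \<Rightarrow> pvar v)"

lemma sig_endo: "(\<And>v m. map_of l v = Some m \<Longrightarrow> snd v = mdeg m) \<Longrightarrow> graded_endo (sub (sig l))"
  by (rule graded_endo_sub) (auto simp: sig_def phom_single pvar_def phom_def split: option.split)

lemma rel_swap: "rel (Mul u w) (Mul w u)"
proof -
  define x where "x = (0::nat, mdeg u)"
  define y where "y = (1::nat, mdeg w)"
  define l where "l = [(x, u), (y, w)]"
  have ge: "graded_endo (sub (sig l))"
    by (rule sig_endo) (auto simp: l_def x_def y_def split: if_splits)
  have sx: "sub (sig l) (pvar x) = Poly_Mapping.single u 1" and sy: "sub (sig l) (pvar y) = Poly_Mapping.single w 1"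
    by (auto simp: sub_pvar sig_def l_def x_def y_def)
  have xy: "x \<noteq> y" by (simp add: x_def y_def)
  consider "card (gen_subgroup {snd x, snd y}) \<le> 2" | "card (gen_subgroup {snd x, snd y}) \<ge> 4"
    using gdich2 by blast
  then show ?thesis
  proof cases
    case 1
    have "pcomm (pvar x) (pvar y) \<in> oct_gens" unfolding oct_gens_def
      by (rule UnI1, rule UnI1, rule UnI1, rule CollectI, rule exI[of _ x], rule exI[of _ y]) (use 1 xy in simp)
    then have "pcomm (pvar x) (pvar y) \<in> I" using gens by blast
    from I_endo[OF ge this] show ?thesis unfolding relI_def
      by (intro exI[of _ 1]) (simp add: pcomm_def sub_diff sub_mul sx sy pmul_single)
  next
    case 2
    have "pjordan (pvar x) (pvar y) \<in> oct_gens" unfolding oct_gens_def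
      by (rule UnI1, rule UnI1, rule UnI2, rule CollectI, rule exI[of _ x], rule exI[of _ y]) (use 2 xy in simp)
    then have "pjordan (pvar x) (pvar y) \<in> I" using gens by blast
    from I_endo[OF ge this] show ?thesis unfolding relI_def
      by (intro exI[of _ "-1"]) (simp add: pjordan_def sub_add sub_mul sx sy pmul_single single_uminus)
  qed
qed

lemma rel_assoc: "rel (Mul (Mul u v) w) (Mul u (Mul v w))"
proof -
  define x where "x = (0::nat, mdeg u)"
  define y where "y = (1::nat, mdeg v)"
  define z where "z = (2::nat, mdeg w)"
  define l where "l = [(x, u), (y, v), (z, w)]"
  have ge: "graded_endo (sub (sig l))"
    by (rule sig_endo) (auto simp: l_def x_def y_def z_def split: if_splits)
  have sx: "sub (sig l) (pvar x) = Poly_Mapping.single u 1" and sy: "sub (sig l) (pvar y) = Poly_Mapping.single v 1"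
    and sz: "sub (sig l) (pvar z) = Poly_Mapping.single w 1"
    by (auto simp: sub_pvar sig_def l_def x_def y_def z_def)
  have xy: "x \<noteq> y" "x \<noteq> z" "y \<noteq> z" by (simp_all add: x_def y_def z_def)
  consider "card (gen_subgroup {snd x, snd y, snd z}) \<le> 4" | "gen_subgroup {snd x, snd y, snd z} = UNIV"
    using gdich3 by blast
  then show ?thesis
  proof cases
    case 1
    have "passoc (pvar x) (pvar y) (pvar z) \<in> oct_gens" unfolding oct_gens_def
      by (rule UnI1, rule UnI2, rule CollectI, rule exI[of _ x], rule exI[of _ y], rule exI[of _ z]) (use 1 xy in simp)
    then have "passoc (pvar x) (pvar y) (pvar z) \<in> I" using gens by blast
    from I_endo[OF ge this] show ?thesis unfolding relI_def
      by (intro exI[of _ 1]) (simp add: passoc_def sub_diff sub_mul sx sy sz pmul_single)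
  next
    case 2
    have "pmul (pmul (pvar x) (pvar y)) (pvar z) + pmul (pvar x) (pmul (pvar y) (pvar z)) \<in> oct_gens" unfolding oct_gens_def
      by (rule UnI2, rule CollectI, rule exI[of _ x], rule exI[of _ y], rule exI[of _ z]) (use 2 xy in simp)
    then have "pmul (pmul (pvar x) (pvar y)) (pvar z) + pmul (pvar x) (pmul (pvar y) (pvar z)) \<in> I"
      using gens by blast
    from I_endo[OF ge this] show ?thesis unfolding relI_def
      by (intro exI[of _ "-1"]) (simp add: sub_add sub_mul sx sy sz pmul_single single_uminus)
  qed
qed

end


fun lv :: "gvar mon \<Rightarrow> gvar list" where
  "lv (Var v) = [v]"
| "lv (Mul u w) = lv u @ lv w"

fun LN :: "gvar mon \<Rightarrow> gvar list \<Rightarrow> gvar mon" where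
  "LN P [] = P"
| "LN P (y # ys) = LN (Mul P (Var y)) ys"

definition Lz :: "gvar list \<Rightarrow> gvar mon" where
  "Lz zs = LN (Var (hd zs)) (tl zs)"

lemma LN_append: "LN P (xs @ ys) = LN (LN P xs) ys"
  by (induction xs arbitrary: P) auto

lemma LN_snoc: "LN P (xs @ [y]) = Mul (LN P xs) (Var y)"
  by (simp add: LN_append)

lemma Lz_snoc: "zs \<noteq> [] \<Longrightarrow> Lz (zs @ [z]) = Mul (Lz zs) (Var z)"
  by (cases zs) (auto simp: Lz_def LN_snoc)

context Iloc
begin

lemmas rel_trans_rule[trans] = rel_trans

lemma LN_cong: "rel Q Q' \<Longrightarrow> rel (LN Q bs) (LN Q' bs)"
  by (induction bs arbitrary: Q Q') (auto intro: rel_congL)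

lemma mul_LN: "rel (Mul P (LN (Var y0) ys)) (LN P (y0 # ys))"
proof (induction ys rule: rev_induct)
  case Nil
  then show ?case by (simp add: rel_refl)
next
  case (snoc y ys)
  have "rel (Mul P (LN (Var y0) (ys @ [y]))) (Mul (Mul P (LN (Var y0) ys)) (Var y))"
    unfolding LN_snoc by (rule rel_sym[OF rel_assoc])
  also have "rel \<dots> (Mul (LN P (y0 # ys)) (Var y))"
    by (rule rel_congL[OF snoc.IH])
  finally show ?case
    using LN_snoc[of P "y0 # ys" y] by simp
qed

lemma flat: "\<exists>x xs. lv m = x # xs \<and> rel m (LN (Var x) xs)"
proof (induction m)
  case (Var v)
  then show ?case by (auto simp: rel_refl)
next
  case (Mul u w)
  obtain x xs where u: "lv u = x # xs" "rel u (LN (Var x) xs)" using Mul.IH(1) by blast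
  obtain y ys where w: "lv w = y # ys" "rel w (LN (Var y) ys)" using Mul.IH(2) by blast
  have "rel (Mul u w) (Mul (LN (Var x) xs) w)" by (rule rel_congL[OF u(2)])
  also have "rel \<dots> (Mul (LN (Var x) xs) (LN (Var y) ys))" by (rule rel_congR[OF w(2)])
  also have "rel \<dots> (LN (LN (Var x) xs) (y # ys))" by (rule mul_LN)
  finally have "rel (Mul u w) (LN (Var x) (xs @ y # ys))" by (simp add: LN_append)
  then show ?case using u(1) w(1) by auto
qed

lemma core_swap: "rel (Mul (Mul R A) B) (Mul (Mul R B) A)"
proof -
  have "rel (Mul (Mul R A) B) (Mul R (Mul A B))" by (rule rel_assoc)
  also have "rel \<dots> (Mul R (Mul B A))" by (rule rel_congR[OF rel_swap])
  also have "rel \<dots> (Mul (Mul R B) A)" by (rule rel_sym[OF rel_assoc])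
  finally show ?thesis .
qed

lemma Lz_swap: "rel (Lz (w1 @ a # b # w2)) (Lz (w1 @ b # a # w2))"
proof (cases w1)
  case Nil
  then show ?thesis by (simp add: Lz_def LN_cong rel_swap)
next
  case (Cons x w1')
  then show ?thesis by (simp add: Lz_def LN_append LN_cong core_swap)
qed

lemma Lz_move: "rel (Lz (w1 @ z # w2)) (Lz (w1 @ w2 @ [z]))"
proof (induction w2 arbitrary: w1)
  case Nil
  then show ?case by (simp add: rel_refl)
next
  case (Cons v w2')
  have "rel (Lz (w1 @ z # v # w2')) (Lz (w1 @ v # z # w2'))" by (rule Lz_swap)
  also have "rel \<dots> (Lz ((w1 @ [v]) @ w2' @ [z]))" using Cons.IH[of "w1 @ [v]"] by simp
  finally show ?case by simp
qed

lemma Lz_perm: "zs \<noteq> [] \<Longrightarrow> mset zs = mset ws \<Longrightarrow> rel (Lz zs) (Lz ws)"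
proof (induction zs arbitrary: ws rule: rev_induct)
  case Nil
  then show ?case by simp
next
  case (snoc z zs)
  have "z \<in> set ws" using snoc.prems(2) by (metis mset_eq_setD in_set_conv_decomp)
  then obtain w1 w2 where ws: "ws = w1 @ z # w2" by (metis split_list)
  have m: "mset zs = mset (w1 @ w2)" using snoc.prems(2) ws by simp
  show ?case
  proof (cases "zs = []")
    case True
    then have "w1 @ w2 = []" using m by simp
    then show ?thesis using True ws by (simp add: rel_refl)
  next
    case False
    then have ne: "w1 @ w2 \<noteq> []" using m by auto
    have "rel (Lz (zs @ [z])) (Mul (Lz (w1 @ w2)) (Var z))"
      unfolding Lz_snoc[OF False] by (rule rel_congL[OF snoc.IH[OF False m]])
    also have "Mul (Lz (w1 @ w2)) (Var z) = Lz (w1 @ w2 @ [z])"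
      using Lz_snoc[OF ne, of z] by simp
    also have "rel \<dots> (Lz ws)" unfolding ws by (rule rel_sym[OF Lz_move])
    finally show ?thesis .
  qed
qed

lemma rel_mset: "mset (lv m) = mset (lv n) \<Longrightarrow> rel m n"
proof -
  assume e: "mset (lv m) = mset (lv n)"
  obtain x xs where m: "lv m = x # xs" "rel m (LN (Var x) xs)" using flat by blast
  obtain y ys where n: "lv n = y # ys" "rel n (LN (Var y) ys)" using flat by blast
  have "rel (Lz (lv m)) (Lz (lv n))" by (rule Lz_perm) (use e m in auto)
  then have "rel (LN (Var x) xs) (LN (Var y) ys)" using m n by (simp add: Lz_def)
  then show ?thesis using m(2) n(2) by (meson rel_sym rel_trans)
qed

end


lemma uni_zero:
  fixes a :: "nat \<Rightarrow> 'a::field"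
  assumes inf: "infinite (UNIV :: 'a set)" and fin: "finite S"
    and z: "\<And>s. (\<Sum>k\<in>S. a k * s ^ k) = 0" and k: "k \<in> S"
  shows "a k = 0"
proof -
  define p where "p = (\<Sum>j\<in>S. monom (a j) j)"
  have "poly p s = 0" for s unfolding p_def poly_sum by (simp add: poly_monom z)
  then have "p = 0" using poly_roots_finite[of p] inf by auto
  then have "coeff p k = 0" by simp
  moreover have "coeff p k = a k"
    unfolding p_def coeff_sum using fin k by (simp add: coeff_monom)
  ultimately show ?thesis by simp
qed

lemma prod_split:
  fixes t :: "'v \<Rightarrow> 'a::comm_monoid_mult"
  shows "prod_mset (image_mset (t(w := s)) X) =
    prod_mset (image_mset t (filter_mset (\<lambda>v. v \<noteq> w) X)) * s ^ count X w"
proof -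
  have X: "X = filter_mset (\<lambda>v. v \<noteq> w) X + replicate_mset (count X w) w"
    using multiset_partition[where M=X and P="\<lambda>v. v \<noteq> w"] filter_eq_replicate_mset[where D=X and x=w] by simp
  have "image_mset (t(w := s)) (filter_mset (\<lambda>v. v \<noteq> w) X) = image_mset t (filter_mset (\<lambda>v. v \<noteq> w) X)"
    by (rule image_mset_cong) auto
  then show ?thesis
    by (subst X) (simp add: prod_mset_Un)
qed

lemma mv_zero:
  fixes e :: "'v multiset \<Rightarrow> 'a::field"
  assumes inf: "infinite (UNIV :: 'a set)" and finW: "finite W"
  shows "finite K \<Longrightarrow> (\<forall>X\<in>K. set_mset X \<subseteq> W) \<Longrightarrow>
    (\<forall>t. (\<Sum>X\<in>K. e X * prod_mset (image_mset t X)) = 0) \<Longrightarrow> X \<in> K \<Longrightarrow> e X = 0"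
  using finW
proof (induction W arbitrary: K e X rule: finite_induct)
  case empty
  then have "K = {{#}}" by auto
  then show ?case using empty.prems by simp
next
  case (insert w W)
  let ?c = "\<lambda>X. count X w"
  let ?r = "\<lambda>X. filter_mset (\<lambda>v. v \<noteq> w) X"
  let ?k = "?c X"
  let ?G = "{Y \<in> K. ?c Y = ?k}"
  have grp: "(\<Sum>Y\<in>?G. e Y * prod_mset (image_mset t (?r Y))) = 0" for t
  proof -
    have "(\<Sum>j\<in>?c ` K. (\<Sum>Y\<in>{Y. Y \<in> K \<and> ?c Y = j}. e Y * prod_mset (image_mset t (?r Y))) * s ^ j) = 0" for s
    proof -
      have "0 = (\<Sum>Y\<in>K. e Y * prod_mset (image_mset (t(w := s)) Y))"
        using insert.prems(3) by simp
      also have "\<dots> = (\<Sum>Y\<in>K. e Y * prod_mset (image_mset t (?r Y)) * s ^ ?c Y)"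
        by (simp add: prod_split mult.assoc)
      also have "\<dots> = (\<Sum>j\<in>?c ` K. (\<Sum>Y\<in>{Y. Y \<in> K \<and> ?c Y = j}. e Y * prod_mset (image_mset t (?r Y)) * s ^ ?c Y))"
        by (rule sum.image_gen[OF insert.prems(1)])
      also have "\<dots> = (\<Sum>j\<in>?c ` K. (\<Sum>Y\<in>{Y. Y \<in> K \<and> ?c Y = j}. e Y * prod_mset (image_mset t (?r Y))) * s ^ j)"
        by (intro sum.cong refl) (simp add: sum_distrib_right)
      finally show ?thesis by simp
    qed
    from uni_zero[OF inf _ this, of ?k] insert.prems(1,4) show ?thesis by simp
  qed
  define K' where "K' = ?r ` ?G"
  define e' where "e' = (\<lambda>Y. e (Y + replicate_mset ?k w))"
  have recon: "Y = ?r Y + replicate_mset ?k w" if "Y \<in> ?G" for Y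
    using that multiset_partition[where M=Y and P="\<lambda>v. v \<noteq> w"] filter_eq_replicate_mset[where D=Y and x=w] by simp
  have inj: "inj_on ?r ?G"
    by (rule inj_onI) (metis recon)
  have "(\<Sum>Y\<in>K'. e' Y * prod_mset (image_mset t Y)) = 0" for t
  proof -
    have "(\<Sum>Y\<in>K'. e' Y * prod_mset (image_mset t Y)) = (\<Sum>Y\<in>?G. e' (?r Y) * prod_mset (image_mset t (?r Y)))"
      unfolding K'_def by (rule sum.reindex[OF inj, unfolded o_def])
    also have "\<dots> = (\<Sum>Y\<in>?G. e Y * prod_mset (image_mset t (?r Y)))"
      unfolding e'_def by (intro sum.cong refl) (metis recon)
    finally show ?thesis using grp by simp
  qed
  moreover have "finite K'" unfolding K'_def using insert.prems(1) by simp
  moreover have "\<forall>Y\<in>K'. set_mset Y \<subseteq> W" unfolding K'_def using insert.prems(2) by auto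
  moreover have "?r X \<in> K'" unfolding K'_def using insert.prems(4) by auto
  ultimately have "e' (?r X) = 0" using insert.IH by blast
  then show ?case unfolding e'_def using recon[of X] insert.prems(4) by simp
qed


context
  fixes \<alpha> \<beta> \<gamma> :: "'a::field"
begin

fun km :: "gvar mon \<Rightarrow> 'a" where
  "km (Var v) = 1"
| "km (Mul u w) = kap \<alpha> \<beta> \<gamma> (mdeg u) (mdeg w) * km u * km w"

lemma km_nz: "\<alpha> \<noteq> 0 \<Longrightarrow> \<beta> \<noteq> 0 \<Longrightarrow> \<gamma> \<noteq> 0 \<Longrightarrow> km m \<noteq> 0"
  by (induction m) (auto simp: kap_nz)

lemma eval_mon_bas:
  "oeval_mon \<alpha> \<beta> \<gamma> (\<lambda>v. bas (snd v) (t v)) m = bas (mdeg m) (km m * prod_mset (image_mset t (mset (lv m))))"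
  by (induction m) (simp_all add: omul_bas prod_mset_Un mult_ac)

end

lemma sum_single: "(\<Sum>a\<in>A. Poly_Mapping.single k (h a)) = Poly_Mapping.single k (\<Sum>a\<in>A. h a)"
  by (induction A rule: infinite_finite_induct) (auto simp: single_add)

context Iloc
begin

lemma I_sum: "(\<And>a. a \<in> A \<Longrightarrow> h a \<in> I) \<Longrightarrow> sum h A \<in> I"
  by (induction A rule: infinite_finite_induct) (auto simp: I_zero I_add)

end

lemma T_oct_diff: "p \<in> T_oct \<alpha> \<beta> \<gamma> \<Longrightarrow> q \<in> T_oct \<alpha> \<beta> \<gamma> \<Longrightarrow> p - q \<in> T_oct \<alpha> \<beta> \<gamma>"
  by (simp add: T_oct_def oeval_diff)

theorem mainTheorem1:
  fixes \<alpha> \<beta> \<gamma> :: "'a::field"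
  assumes "infinite (UNIV :: 'a set)"
    and "(2::'a) \<noteq> 0"
    and "\<alpha> \<noteq> 0" and "\<beta> \<noteq> 0" and "\<gamma> \<noteq> 0"
  shows "T_oct \<alpha> \<beta> \<gamma> = T_generated (oct_gens :: 'a fpoly set)"
proof
  let ?I = "T_generated (oct_gens :: 'a fpoly set)"
  show "?I \<subseteq> T_oct \<alpha> \<beta> \<gamma>"
    by (rule TG_least[OF T_oct_graded gens_in_T_oct])
  interpret Iloc ?I by unfold_locales (rule TG_graded, rule TG_sub)
  have IT: "?I \<subseteq> T_oct \<alpha> \<beta> \<gamma>" by (rule TG_least[OF T_oct_graded gens_in_T_oct])
  show "T_oct \<alpha> \<beta> \<gamma> \<subseteq> ?I"
  proof
    fix f :: "'a fpoly" assume fT: "f \<in> T_oct \<alpha> \<beta> \<gamma>"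
    define Kf where "Kf = Poly_Mapping.keys f"
    define \<mu> where "\<mu> = (\<lambda>m. mset (lv m))"
    define M where "M = \<mu> ` Kf"
    define r where "r = (\<lambda>X. SOME m. m \<in> Kf \<and> \<mu> m = X)"
    have finK: "finite Kf" by (simp add: Kf_def)
    have finM: "finite M" by (simp add: M_def finK)
    have r: "r X \<in> Kf \<and> \<mu> (r X) = X" if "X \<in> M" for X
      unfolding r_def by (rule someI_ex) (use that M_def in auto)
    have "\<exists>c. c \<noteq> 0 \<and> Poly_Mapping.single m 1 - Poly_Mapping.single (r (\<mu> m)) c \<in> ?I" if "m \<in> Kf" for m
    proof -
      have "\<mu> m \<in> M" using that by (simp add: M_def)
      then have "mset (lv m) = mset (lv (r (\<mu> m)))" using r unfolding \<mu>_def by metis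
      then show ?thesis using rel_mset unfolding relI_def by blast
    qed
    then obtain c where c: "\<And>m. m \<in> Kf \<Longrightarrow> Poly_Mapping.single m 1 - Poly_Mapping.single (r (\<mu> m)) (c m) \<in> ?I"
      by metis
    define g where "g = (\<Sum>m\<in>Kf. Poly_Mapping.single (r (\<mu> m)) (Poly_Mapping.lookup f m * c m))"
    have fg: "f - g \<in> ?I"
    proof -
      have "f - g = (\<Sum>m\<in>Kf. psc (Poly_Mapping.lookup f m) (Poly_Mapping.single m 1 - Poly_Mapping.single (r (\<mu> m)) (c m)))"
        unfolding g_def
        by (subst poly_expand[of f]) (simp add: Kf_def psc_diff psc_single sum_subtractf)
      also have "\<dots> \<in> ?I" by (rule I_sum) (rule I_psc[OF c])
      finally show ?thesis .
    qed
    have gT: "g \<in> T_oct \<alpha> \<beta> \<gamma>"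
    proof -
      have "f - (f - g) \<in> T_oct \<alpha> \<beta> \<gamma>" using T_oct_diff fT IT fg by blast
      then show ?thesis by simp
    qed
    define d where "d = (\<lambda>X. \<Sum>m\<in>{m. m \<in> Kf \<and> \<mu> m = X}. Poly_Mapping.lookup f m * c m)"
    have g2: "g = (\<Sum>X\<in>M. Poly_Mapping.single (r X) (d X))"
    proof -
      have "g = (\<Sum>X\<in>M. \<Sum>m\<in>{m. m \<in> Kf \<and> \<mu> m = X}. Poly_Mapping.single (r (\<mu> m)) (Poly_Mapping.lookup f m * c m))"
        unfolding g_def M_def by (rule sum.image_gen[OF finK])
      also have "\<dots> = (\<Sum>X\<in>M. \<Sum>m\<in>{m. m \<in> Kf \<and> \<mu> m = X}. Poly_Mapping.single (r X) (Poly_Mapping.lookup f m * c m))"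
        by (intro sum.cong refl) auto
      also have "\<dots> = (\<Sum>X\<in>M. Poly_Mapping.single (r X) (d X))"
        unfolding d_def by (simp add: sum_single)
      finally show ?thesis .
    qed
    have d0: "d X = 0" if X: "X \<in> M" for X
    proof -
      define a where "a = mdeg (r X)"
      define Ma where "Ma = {Y \<in> M. mdeg (r Y) = a}"
      define W where "W = (\<Union>Y\<in>M. set_mset Y)"
      have "(\<Sum>Y\<in>Ma. (d Y * km \<alpha> \<beta> \<gamma> (r Y)) * prod_mset (image_mset t Y)) = 0" for t :: "gvar \<Rightarrow> 'a"
      proof -
        let ?\<nu> = "\<lambda>v. bas (snd v) (t v)"
        have hom: "\<forall>v. ohom (snd v) (?\<nu> v)" by (auto simp: ohom_bas)
        have "oeval \<alpha> \<beta> \<gamma> ?\<nu> g = 0" by (rule mp[OF spec[OF gT[unfolded T_oct_def mem_Collect_eq]] hom])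
        then have "0 = coord a (\<Sum>Y\<in>M. osc (d Y) (oeval_mon \<alpha> \<beta> \<gamma> ?\<nu> (r Y)))"
          unfolding g2 oeval_sum oeval_single by simp
        also have "\<dots> = (\<Sum>Y\<in>M. if a = mdeg (r Y) then d Y * (km \<alpha> \<beta> \<gamma> (r Y) * prod_mset (image_mset t Y)) else 0)"
          unfolding coord_sum
          by (intro sum.cong refl) (use r in \<open>simp add: eval_mon_bas osc_bas coord_bas \<mu>_def\<close>)
        also have "\<dots> = (\<Sum>Y\<in>Ma. (d Y * km \<alpha> \<beta> \<gamma> (r Y)) * prod_mset (image_mset t Y))"
          unfolding Ma_def using finM by (simp add: sum.inter_filter[symmetric] mult_ac eq_commute)
        finally show ?thesis by simp
      qed
      moreover have "finite W" unfolding W_def using finM by auto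
      moreover have "finite Ma" unfolding Ma_def using finM by simp
      moreover have "\<forall>Y\<in>Ma. set_mset Y \<subseteq> W" unfolding Ma_def W_def by auto
      moreover have "X \<in> Ma" unfolding Ma_def a_def using X by simp
      ultimately have "d X * km \<alpha> \<beta> \<gamma> (r X) = 0"
        using mv_zero[OF assms(1), of W Ma "\<lambda>Y. d Y * km \<alpha> \<beta> \<gamma> (r Y)" X] by blast
      then show ?thesis using km_nz[OF assms(3-5)] by simp
    qed
    have "g = 0" unfolding g2 using d0 by simp
    then have "f = f - g" by simp
    then show "f \<in> ?I" using fg by simp
  qed
qed


end
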